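(* Let $n\ge1$, $\alpha_1,\dots,\alpha_n\ge0$, and let $U:[0,\infty)\to\mathbb{R}$ be continuous, strictly increasing, concave and differentiable with $U(0)=0$. Let $\varepsilon>0$ be such that $\varepsilon/n$ lies in the range of $U$, and suppose $K:=1/U^{-1}(\varepsilon/n)$ is a positive integer. Let $\mathrm{OPT}$ be the maximum of $\sum_{i=1}^n U(\alpha_i+x_i)$ over real $x_i\ge0$ with $\sum_i x_i=1$, and let $\mathrm{OPT}_K$ be the maximum of the same objective over $x_i\in\{0,1/K,2/K,\dots\}$ with $\sum_i x_i\le1$. Then $\mathrm{OPT}-\mathrm{OPT}_K\le\varepsilon$; that is, an optimal solution of the $K$-discretized problem is an additive $\varepsilon$-approximation of the optimum of the continuous problem.
   Context: The continuous common goods problem: one agent with one unit of infinitely divisible resource and $n$ goods with existing resource levels $\alpha_i$, utility $\sum_i U(\alpha_i+x_i)$. The $K$-discretized version: the agent's unit of resource consists of $K$ atomic units of volume $1/K$. *)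

theory Defs
  imports "HOL-Analysis.Analysis"
begin

definition cg_obj :: "(real \<Rightarrow> real) \<Rightarrow> (nat \<Rightarrow> real) \<Rightarrow> nat \<Rightarrow> (nat \<Rightarrow> real) \<Rightarrow> real" where
  "cg_obj U \<alpha> n x = (\<Sum>i<n. U (\<alpha> i + x i))"

definition cont_feasible :: "nat \<Rightarrow> (nat \<Rightarrow> real) \<Rightarrow> bool" where
  "cont_feasible n x \<longleftrightarrow> (\<forall>i<n. x i \<ge> 0) \<and> (\<Sum>i<n. x i) = 1"

definition disc_feasible :: "nat \<Rightarrow> nat \<Rightarrow> (nat \<Rightarrow> real) \<Rightarrow> bool" where
  "disc_feasible K n x \<longleftrightarrow> (\<forall>i<n. \<exists>k::nat. x i = real k / real K) \<and> (\<Sum>i<n. x i) \<le> 1"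

text \<open>Optimal values (the maxima are attained; Sup equals the maximum).\<close>
definition OPT :: "(real \<Rightarrow> real) \<Rightarrow> (nat \<Rightarrow> real) \<Rightarrow> nat \<Rightarrow> real" where
  "OPT U \<alpha> n = Sup (cg_obj U \<alpha> n ` {x. cont_feasible n x})"

definition OPT_K :: "nat \<Rightarrow> (real \<Rightarrow> real) \<Rightarrow> (nat \<Rightarrow> real) \<Rightarrow> nat \<Rightarrow> real" where
  "OPT_K K U \<alpha> n = Sup (cg_obj U \<alpha> n ` {x. disc_feasible K n x})"

end

theory Submission
  imports Defs
begin

lemma concave_superadd:
  fixes U :: "real \<Rightarrow> real"
  assumes c: "concave_on {0..} U" and U0: "U 0 = 0" and a: "a \<ge> 0" and d: "d \<ge> 0"
  shows "U (a + d) - U a \<le> U d"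
proof (cases "a + d = 0")
  case True
  then have "a = 0" "d = 0" using a d by auto
  then show ?thesis using U0 by simp
next
  case False
  then have s: "a + d > 0" using a d by auto
  define t where "t = d / (a + d)"
  have t0: "t \<ge> 0" "t \<le> 1" using s a d by (auto simp: t_def field_simps)
  have 1: "U ((1 - t) *\<^sub>R 0 + t *\<^sub>R (a + d)) \<ge> (1 - t) * U 0 + t * U (a + d)"
    using concave_onD[OF c, of t 0 "a+d"] t0 s by auto
  have e1: "(1 - t) *\<^sub>R 0 + t *\<^sub>R (a + d) = d" using s by (simp add: t_def)
  have 2: "U ((1 - (1 - t)) *\<^sub>R 0 + (1 - t) *\<^sub>R (a + d)) \<ge> (1 - (1 - t)) * U 0 + (1 - t) * U (a + d)"
    using concave_onD[OF c, of "1 - t" 0 "a+d"] t0 s by auto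
  have e2: "(1 - (1 - t)) *\<^sub>R 0 + (1 - t) *\<^sub>R (a + d) = a"
    using s by (simp add: t_def field_simps)
  from 1 2 e1 e2 U0 show ?thesis by (simp add: algebra_simps)
qed

theorem lemma3:
  fixes n K :: nat and \<alpha> :: "nat \<Rightarrow> real" and U :: "real \<Rightarrow> real" and \<epsilon> :: real
  assumes "n \<ge> 1"
    and "\<forall>i<n. \<alpha> i \<ge> 0"
    and "continuous_on {0..} U"
    and "strict_mono_on {0..} U"
    and "concave_on {0..} U"
    and "U differentiable_on {0..}"
    and "U 0 = 0"
    and "\<epsilon> > 0"
    and "K > 0"
    and "U (1 / real K) = \<epsilon> / real n"
  shows "OPT U \<alpha> n - OPT_K K U \<alpha> n \<le> \<epsilon>"
proof -
  note sm = assms(4)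
  have mono: "U u \<le> U v" if "0 \<le> u" "u \<le> v" for u v
  proof (cases "u = v")
    case False
    then have "u < v" using that by simp
    then show ?thesis using sm that unfolding strict_mono_on_def by (meson atLeast_iff less_imp_le order_trans)
  qed simp
  let ?B = "\<Sum>i<n. U (\<alpha> i + 1)"
  have bdd: "bdd_above (cg_obj U \<alpha> n ` {x. disc_feasible K n x})"
  proof (rule bdd_aboveI2)
    fix x assume "x \<in> {x. disc_feasible K n x}"
    then have df: "disc_feasible K n x" by simp
    have nn: "\<forall>i<n. x i \<ge> 0" using df unfolding disc_feasible_def by force
    have le1: "x i \<le> 1" if "i < n" for i
    proof -
      have "x i = (\<Sum>j\<in>{i}. x j)" by simp
      also have "\<dots> \<le> (\<Sum>j<n. x j)"
        by (rule sum_mono2) (use that nn in auto)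
      also have "\<dots> \<le> 1" using df unfolding disc_feasible_def by simp
      finally show ?thesis .
    qed
    show "cg_obj U \<alpha> n x \<le> ?B" unfolding cg_obj_def
      by (rule sum_mono) (use mono assms(2) nn le1 in auto)
  qed
  have ne: "{x. cont_feasible n x} \<noteq> {}"
  proof -
    have "cont_feasible n (\<lambda>i. if i = 0 then 1 else 0)"
      using assms(1) unfolding cont_feasible_def by (simp add: sum.delta)
    then show ?thesis by blast
  qed
  have main: "cg_obj U \<alpha> n x \<le> OPT_K K U \<alpha> n + \<epsilon>" if cf: "cont_feasible n x" for x
  proof -
    define y where "y i = real (nat \<lfloor>real K * x i\<rfloor>) / real K" for i
    have xn: "x i \<ge> 0" if "i < n" for i using cf that unfolding cont_feasible_def by auto
    have Kp: "real K > 0" using assms(9) by simp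
    have yle: "y i \<le> x i" and ydiff: "x i - y i \<le> 1 / real K" and y0: "y i \<ge> 0"
      if "i < n" for i
    proof -
      have f0: "\<lfloor>real K * x i\<rfloor> \<ge> 0" using xn[OF that] Kp by simp
      have yi: "y i = real_of_int \<lfloor>real K * x i\<rfloor> / real K" using f0 by (simp add: y_def)
      have a: "real_of_int \<lfloor>real K * x i\<rfloor> \<le> real K * x i" by simp
      have b: "real K * x i < real_of_int \<lfloor>real K * x i\<rfloor> + 1" by linarith
      show "y i \<le> x i" using a Kp by (simp add: yi field_simps)
      have "x i - y i = (real K * x i - real_of_int \<lfloor>real K * x i\<rfloor>) / real K"
        using Kp by (simp add: yi field_simps)
      also have "\<dots> \<le> 1 / real K" using b Kp by (intro divide_right_mono) linarith+
      finally show "x i - y i \<le> 1 / real K" .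
      show "y i \<ge> 0" using f0 Kp by (simp add: yi)
    qed
    have df: "disc_feasible K n y"
      unfolding disc_feasible_def
    proof
      show "\<forall>i<n. \<exists>k::nat. y i = real k / real K" by (auto simp: y_def)
      have "(\<Sum>i<n. y i) \<le> (\<Sum>i<n. x i)" by (rule sum_mono) (use yle in auto)
      then show "(\<Sum>i<n. y i) \<le> 1" using cf unfolding cont_feasible_def by simp
    qed
    have "cg_obj U \<alpha> n x - cg_obj U \<alpha> n y = (\<Sum>i<n. U (\<alpha> i + x i) - U (\<alpha> i + y i))"
      unfolding cg_obj_def by (simp add: sum_subtractf)
    also have "\<dots> \<le> (\<Sum>i<n. U (1 / real K))"
    proof (rule sum_mono)
      fix i assume "i \<in> {..<n}"
      then have i: "i < n" by simp
      have "U ((\<alpha> i + y i) + (x i - y i)) - U (\<alpha> i + y i) \<le> U (x i - y i)"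
        by (rule concave_superadd[OF assms(5) assms(7)]) (use assms(2) i y0 yle in auto)
      also have "\<dots> \<le> U (1 / real K)" using mono ydiff[OF i] yle[OF i] by auto
      finally show "U (\<alpha> i + x i) - U (\<alpha> i + y i) \<le> U (1 / real K)" by simp
    qed
    also have "\<dots> = \<epsilon>" using assms(10) assms(1) by simp
    finally have "cg_obj U \<alpha> n x \<le> cg_obj U \<alpha> n y + \<epsilon>" by simp
    moreover have "cg_obj U \<alpha> n y \<le> OPT_K K U \<alpha> n"
      unfolding OPT_K_def by (rule cSUP_upper) (use df bdd in auto)
    ultimately show ?thesis by simp
  qed
  have "OPT U \<alpha> n \<le> OPT_K K U \<alpha> n + \<epsilon>"
    unfolding OPT_def by (rule cSUP_least) (use ne main in auto)
  then show ?thesis by simp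
qed

end
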